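(* For every positive integer $n$ there are vectors $v,w\in E_8$ with $\langle v,v\rangle=\langle w,w\rangle=2n$ and $\langle v,w\rangle=2n-1$.
   Context: $E_8$ denotes the unique even unimodular positive definite lattice of rank $8$, with bilinear form $\langle\cdot,\cdot\rangle$. *)

theory Defs
  imports "HOL-Analysis.Analysis" "HOL-Library.Numeral_Type"
begin

text \<open>This is the (up to isometry unique) even unimodular positive definite lattice
of rank 8.\<close>

definition E8 :: "(real^8) set" where
  "E8 = {x. ((\<forall>i. x $ i \<in> \<int>) \<or> (\<forall>i. x $ i - 1/2 \<in> \<int>))
            \<and> (\<exists>k::int. (\<Sum>i\<in>UNIV. x $ i) = 2 * of_int k)}"

definition E8_form :: "real^8 \<Rightarrow> real^8 \<Rightarrow> real" where
  "E8_form v w = v \<bullet> w"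

end

theory Submission
  imports Defs "HOL-Computational_Algebra.Primes"
begin


definition sq4 :: "int \<Rightarrow> bool" where
  "sq4 n \<longleftrightarrow> (\<exists>a b c d. n = a^2+b^2+c^2+d^2)"

lemma euler_id:
  fixes a b c d A B C D :: int
  shows "(a^2+b^2+c^2+d^2)*(A^2+B^2+C^2+D^2) =
    (a*A+b*B+c*C+d*D)^2 + (a*B-b*A+c*D-d*C)^2 + (a*C-b*D-c*A+d*B)^2 + (a*D+b*C-c*B-d*A)^2"
  by (simp add: power2_eq_square algebra_simps)

lemma sq4_mult: "sq4 x \<Longrightarrow> sq4 y \<Longrightarrow> sq4 (x*y)"
  unfolding sq4_def using euler_id by metis

lemma sq_mod_inj:
  fixes p x y :: int
  assumes p: "prime p" and x: "0 \<le> x" "2*x < p" and y: "0 \<le> y" "2*y < p"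
    and eq: "x^2 mod p = y^2 mod p"
  shows "x = y"
proof -
  have "p dvd (x-y)*(x+y)" using eq by (simp add: mod_eq_dvd_iff power2_eq_square algebra_simps)
  hence "p dvd x-y \<or> p dvd x+y" using p by (simp add: prime_dvd_mult_iff)
  thus ?thesis
  proof
    assume "p dvd x - y"
    then obtain k where k: "x - y = p*k" by (auto elim: dvdE)
    have "k = 0"
    proof (rule ccontr)
      assume "k \<noteq> 0"
      hence "\<bar>p*k\<bar> \<ge> p" using x y by (simp add: abs_mult)
      thus False using k x y by linarith
    qed
    thus ?thesis using k by simp
  next
    assume "p dvd x + y"
    then obtain k where k: "x + y = p*k" by (auto elim: dvdE)
    have "k = 0"
    proof (rule ccontr)
      assume "k \<noteq> 0"
      hence "\<bar>p*k\<bar> \<ge> p" using x y by (simp add: abs_mult)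
      thus False using k x y by linarith
    qed
    thus ?thesis using k x y by simp
  qed
qed

lemma pigeon:
  fixes p :: int
  assumes p: "prime p" and odd: "odd p"
  shows "\<exists>x y. 0 \<le> x \<and> 2*x < p \<and> 0 \<le> y \<and> 2*y < p \<and> p dvd x^2+y^2+1"
proof -
  define h where "h = (p - 1) div 2"
  have p2: "p \<ge> 2" using p prime_ge_2_int by blast
  have hp: "2*h + 1 = p" using odd unfolding h_def by (auto elim!: oddE)
  define S where "S = (\<lambda>x. x^2 mod p) ` {0..h}"
  define T where "T = (\<lambda>y. (-1-y^2) mod p) ` {0..h}"
  have injS: "inj_on (\<lambda>x. x^2 mod p) {0..h}"
    by (rule inj_onI) (rule sq_mod_inj[OF p], use hp in auto)
  have injT: "inj_on (\<lambda>y. (-1-y^2) mod p) {0..h}"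
  proof (rule inj_onI)
    fix x y assume xy: "x \<in> {0..h}" "y \<in> {0..h}" "(-1-x^2) mod p = (-1-y^2) mod p"
    have "x^2 mod p = y^2 mod p" using xy(3) by (simp add: mod_eq_dvd_iff) (metis dvd_minus_iff minus_diff_eq)
    thus "x = y" using sq_mod_inj[OF p, of x y] xy hp by auto
  qed
  have cS: "card S = h + 1" unfolding S_def using card_image[OF injS] hp p2 by simp
  have cT: "card T = h + 1" unfolding T_def using card_image[OF injT] hp p2 by simp
  have sub: "S \<union> T \<subseteq> {0..<p}" unfolding S_def T_def using p2 by auto
  have "card (S \<union> T) \<le> p" using card_mono[OF _ sub] p2 by simp
  moreover have "finite S" "finite T" unfolding S_def T_def by auto
  ultimately have "S \<inter> T \<noteq> {}" using card_Un_disjoint[of S T] cS cT hp by fastforce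
  then obtain x y where xy: "x \<in> {0..h}" "y \<in> {0..h}" "x^2 mod p = (-1-y^2) mod p"
    unfolding S_def T_def by (auto simp del: atLeastAtMost_iff)
  have "p dvd x^2+y^2+1" using xy(3) by (simp add: mod_eq_dvd_iff) (metis diff_minus_eq_add dvd_minus_iff minus_diff_eq add.assoc diff_diff_eq2 uminus_add_conv_diff)
  thus ?thesis using xy hp by (intro exI[of _ x] exI[of _ y]) auto
qed

definition rd :: "int \<Rightarrow> int \<Rightarrow> int" where
  "rd m a = (if 2*(a mod m) \<le> m then a mod m else a mod m - m)"

lemma rd_dvd: "m > 0 \<Longrightarrow> m dvd a - rd m a"
proof -
  assume m: "m > 0"
  have "a - a mod m = m * (a div m)" by (simp add: minus_mod_eq_mult_div)
  show ?thesis
  proof (cases "2*(a mod m) \<le> m")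
    case True thus ?thesis unfolding rd_def using \<open>a - a mod m = m * (a div m)\<close> by simp
  next
    case False
    have "a - (a mod m - m) = m * (a div m + 1)" using \<open>a - a mod m = m * (a div m)\<close> by (simp add: algebra_simps)
    thus ?thesis unfolding rd_def using False by (metis dvd_triv_left)
  qed
qed

lemma rd_bound: "m > 0 \<Longrightarrow> 4*(rd m a)^2 \<le> m^2"
proof -
  assume m: "m > 0"
  have "0 \<le> a mod m" "a mod m < m" using m by auto
  hence "\<bar>2 * rd m a\<bar> \<le> m" unfolding rd_def by auto
  hence "(2 * rd m a)^2 \<le> m^2" using m by (metis abs_le_square_iff abs_of_pos)
  thus ?thesis by (simp add: power_mult_distrib)
qed

lemma half_case:
  fixes m a A :: int
  assumes "m dvd a - A" "4*A^2 = m^2"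
  shows "\<exists>e. 4*a^2 = m^2*(4*e+1)"
proof -
  obtain t where t: "a - A = m*t" using assms(1) by (auto elim: dvdE)
  have "(2*A - m)*(2*A+m) = 0" using assms(2) by (simp add: power2_eq_square algebra_simps)
  hence "2*A = m \<or> 2*A = -m" by auto
  thus ?thesis
  proof
    assume h: "2*A = m"
    have "4*a^2 = (2*A + 2*m*t)^2" using t by (simp add: power2_eq_square algebra_simps)
    also have "\<dots> = m^2*(4*(t+t^2)+1)" using h by (simp add: power2_eq_square algebra_simps)
    finally show ?thesis by blast
  next
    assume h: "2*A = -m"
    have "4*a^2 = (2*A + 2*m*t)^2" using t by (simp add: power2_eq_square algebra_simps)
    also have "\<dots> = m^2*(4*(t^2-t)+1)" using h by (simp add: power2_eq_square algebra_simps)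
    finally show ?thesis by blast
  qed
qed

lemma prime_no_mid_div:
  fixes p m :: int
  assumes "prime p" "1 < m" "m < p" "m dvd p"
  shows False
proof -
  have "0 \<le> m" using assms(2) by simp
  hence "m = 1 \<or> m = p" using assms(1,4) unfolding prime_int_iff by blast
  thus False using assms by linarith
qed

lemma descent:
  fixes p m :: int
  assumes p: "prime p" and s: "sq4 (m*p)" and m1: "1 < m" and mp: "m < p"
  shows "\<exists>r. 0 < r \<and> r < m \<and> sq4 (r*p)"
proof -
  have m0: "m > 0" using m1 by simp
  obtain a b c d where abcd: "m*p = a^2+b^2+c^2+d^2" using s unfolding sq4_def by blast
  define A where "A = rd m a"
  define B where "B = rd m b"
  define C where "C = rd m c"
  define D where "D = rd m d"
  obtain u1 where u1: "a = A + m*u1" using rd_dvd[OF m0, of a] unfolding A_def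
    by (auto elim!: dvdE simp: algebra_simps)
  obtain u2 where u2: "b = B + m*u2" using rd_dvd[OF m0, of b] unfolding B_def
    by (auto elim!: dvdE simp: algebra_simps)
  obtain u3 where u3: "c = C + m*u3" using rd_dvd[OF m0, of c] unfolding C_def
    by (auto elim!: dvdE simp: algebra_simps)
  obtain u4 where u4: "d = D + m*u4" using rd_dvd[OF m0, of d] unfolding D_def
    by (auto elim!: dvdE simp: algebra_simps)
  have bA: "4*A^2 \<le> m^2" "4*B^2 \<le> m^2" "4*C^2 \<le> m^2" "4*D^2 \<le> m^2"
    unfolding A_def B_def C_def D_def using rd_bound[OF m0] by auto
  define r where "r = p - (2*A*u1 + m*u1^2) - (2*B*u2 + m*u2^2) - (2*C*u3 + m*u3^2) - (2*D*u4 + m*u4^2)"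
  have S: "A^2+B^2+C^2+D^2 = m*r"
  proof -
    have "m*p = (A + m*u1)^2+(B + m*u2)^2+(C + m*u3)^2+(D + m*u4)^2"
      using abcd u1 u2 u3 u4 by simp
    thus ?thesis unfolding r_def by (simp add: power2_eq_square algebra_simps)
  qed
  have r0: "r \<ge> 0"
  proof -
    have "m*r \<ge> 0" using S[symmetric] by (simp add: add_nonneg_nonneg)
    thus ?thesis using m0 by (simp add: zero_le_mult_iff)
  qed
  have rm: "r \<le> m"
  proof -
    have "4*(m*r) \<le> 4*(m*m)" using S bA by (simp add: power2_eq_square)
    thus ?thesis using m0 by simp
  qed
  have "r \<noteq> 0"
  proof
    assume "r = 0"
    hence "A = 0" "B = 0" "C = 0" "D = 0" using S by (auto simp: add_nonneg_eq_0_iff)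
    hence "m*p = m*(m*(u1^2+u2^2+u3^2+u4^2))" using abcd u1 u2 u3 u4
      by (simp add: power2_eq_square algebra_simps)
    hence "p = m*(u1^2+u2^2+u3^2+u4^2)" using m0 by simp
    thus False using prime_no_mid_div[OF p m1 mp] by simp
  qed
  moreover have "r \<noteq> m"
  proof
    assume "r = m"
    hence eqs: "4*A^2 = m^2" "4*B^2 = m^2" "4*C^2 = m^2" "4*D^2 = m^2"
      using S bA by (simp_all add: power2_eq_square)
    obtain e1 where e1: "4*a^2 = m^2*(4*e1+1)" using half_case[OF _ eqs(1), of a] u1 by auto
    obtain e2 where e2: "4*b^2 = m^2*(4*e2+1)" using half_case[OF _ eqs(2), of b] u2 by auto
    obtain e3 where e3: "4*c^2 = m^2*(4*e3+1)" using half_case[OF _ eqs(3), of c] u3 by auto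
    obtain e4 where e4: "4*d^2 = m^2*(4*e4+1)" using half_case[OF _ eqs(4), of d] u4 by auto
    have "4*(m*p) = 4*(m*(m*(e1+e2+e3+e4+1)))" using abcd e1 e2 e3 e4
      by (simp add: power2_eq_square algebra_simps)
    hence "p = m*(e1+e2+e3+e4+1)" using m0 by simp
    thus False using prime_no_mid_div[OF p m1 mp] by simp
  qed
  moreover have "sq4 (r*p)"
  proof -
    define q1 where "q1 = r + u1*A+u2*B+u3*C+u4*D"
    define q2 where "q2 = u1*B - u2*A + u3*D - u4*C"
    define q3 where "q3 = u1*C - u2*D - u3*A + u4*B"
    define q4 where "q4 = u1*D + u2*C - u3*B - u4*A"
    have P1: "a*A+b*B+c*C+d*D = m*q1" unfolding q1_def using S u1 u2 u3 u4
      by (simp add: power2_eq_square algebra_simps)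
    have P2: "a*B-b*A+c*D-d*C = m*q2" unfolding q2_def using u1 u2 u3 u4
      by (simp add: algebra_simps)
    have P3: "a*C-b*D-c*A+d*B = m*q3" unfolding q3_def using u1 u2 u3 u4
      by (simp add: algebra_simps)
    have P4: "a*D+b*C-c*B-d*A = m*q4" unfolding q4_def using u1 u2 u3 u4
      by (simp add: algebra_simps)
    have "(m*p)*(m*r) = (m*q1)^2+(m*q2)^2+(m*q3)^2+(m*q4)^2"
      using euler_id[of a b c d A B C D] abcd S P1 P2 P3 P4 by simp
    hence "m^2*(r*p) = m^2*(q1^2+q2^2+q3^2+q4^2)" by (simp add: power2_eq_square algebra_simps)
    hence "r*p = q1^2+q2^2+q3^2+q4^2" using m0 by simp
    thus ?thesis unfolding sq4_def by blast
  qed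
  ultimately show ?thesis using r0 rm by (intro exI[of _ r]) auto
qed

lemma sq4_prime_aux:
  fixes p :: int
  assumes p: "prime p"
  shows "\<forall>m. nat m = k \<longrightarrow> 0 < m \<longrightarrow> m < p \<longrightarrow> sq4 (m*p) \<longrightarrow> sq4 p"
proof (induction k rule: less_induct)
  case (less k)
  show ?case
  proof (intro allI impI)
    fix m assume h: "nat m = k" "0 < m" "m < p" "sq4 (m*p)"
    show "sq4 p"
    proof (cases "m = 1")
      case True thus ?thesis using h by simp
    next
      case False
      then obtain r where r: "0 < r" "r < m" "sq4 (r*p)" using descent[OF p h(4)] h by auto
      show ?thesis using less[rule_format, of "nat r" r] r h by auto
    qed
  qed
qed

lemma sq4_prime:
  fixes p :: int
  assumes p: "prime p"
  shows "sq4 p"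
proof (cases "p = 2")
  case True
  thus ?thesis unfolding sq4_def by (intro exI[of _ 1] exI[of _ 0]) simp
next
  case False
  hence "odd p" using p prime_odd_int[of p] by (metis prime_ge_2_int order.not_eq_order_implies_strict)
  then obtain x y where xy: "0 \<le> x" "2*x < p" "0 \<le> y" "2*y < p" "p dvd x^2+y^2+1"
    using pigeon[OF p] by blast
  obtain m where m: "x^2+y^2+1 = p*m" using xy(5) by (auto elim: dvdE)
  have p0: "p > 0" using p prime_gt_0_int by blast
  have "p*m > 0" using m[symmetric] by (simp add: add_nonneg_pos)
  hence "m > 0" using p0 by (simp add: zero_less_mult_iff)
  moreover have "m < p"
  proof -
    have "(2*x)^2 < p^2" by (rule power_strict_mono) (use xy in auto)
    moreover have "(2*y)^2 < p^2" by (rule power_strict_mono) (use xy in auto)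
    moreover have "p^2 \<ge> 4" using prime_ge_2_int[OF p] power_mono[of 2 p 2] by simp
    ultimately have "4*(p*m) < 4*(p^2)" using m by (simp add: power_mult_distrib)
    hence "p*m < p*p" by (simp add: power2_eq_square)
    thus ?thesis using p0 by simp
  qed
  moreover have "sq4 (m*p)" unfolding sq4_def using m
    by (intro exI[of _ x] exI[of _ y] exI[of _ 1] exI[of _ 0]) (simp add: algebra_simps)
  ultimately show ?thesis using sq4_prime_aux[OF p, rule_format, of m "nat m"] by auto
qed

lemma sq4_all_aux: "\<forall>n::int. nat n = k \<longrightarrow> n \<ge> 0 \<longrightarrow> sq4 n"
proof (induction k rule: less_induct)
  case (less k)
  show ?case
  proof (intro allI impI)
    fix n :: int assume h: "nat n = k" "n \<ge> 0"
    show "sq4 n"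
    proof (cases "n \<le> 1")
      case True
      hence "n = 0 \<or> n = 1" using h by auto
      thus ?thesis unfolding sq4_def
        by (metis add.right_neutral power_one zero_power2)
    next
      case False
      then obtain p where p: "prime p" "p dvd n" using prime_factor_int[of n] by auto
      then obtain k' where k': "n = p*k'" by (auto elim: dvdE)
      have p1: "p > 1" using p prime_gt_1_int by blast
      have "k' > 0" using k' False p1 by (smt (verit) mult_nonneg_nonpos)
      hence "k' < n" using k' p1 by (smt (verit) mult_less_cancel_right1)
      hence "sq4 k'" using less[rule_format, of "nat k'" k'] h \<open>k' > 0\<close> by auto
      thus ?thesis using sq4_mult[OF sq4_prime[OF p(1)]] k' by simp
    qed
  qed
qed

lemma sq4_all: "n \<ge> 0 \<Longrightarrow> sq4 n"
  using sq4_all_aux by blast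


lemma axsum: "(\<Sum>i\<in>UNIV. axis (k::8) (1::real) $ i) = 1"
  by (simp add: axis_def)

lemma parity4:
  fixes a b c d :: int
  assumes "a^2+b^2+c^2+d^2 = 2*N - 1"
  shows "\<exists>k. 1 + a + b + c + d = 2*k" "\<exists>k. -1 + a + b + c + d = 2*k"
proof -
  have "odd (a^2+b^2+c^2+d^2)" using assms by simp
  hence e1: "even (1 + a + b + c + d)" and e2: "even (-1 + a + b + c + d)" by auto
  show "\<exists>k. 1 + a + b + c + d = 2*k" using e1 by (blast elim: evenE)
  show "\<exists>k. -1 + a + b + c + d = 2*k" using e2 by (blast elim: evenE)
qed

theorem lemma2p2:
  fixes n :: nat
  assumes "n \<ge> 1"
  shows "\<exists>v\<in>E8. \<exists>w\<in>E8. E8_form v v = 2 * real n \<and> E8_form w w = 2 * real n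
           \<and> E8_form v w = 2 * real n - 1"
proof -
  have "sq4 (2 * int n - 1)" using assms by (intro sq4_all) simp
  then obtain a b c d :: int where abcd: "2 * int n - 1 = a^2+b^2+c^2+d^2" unfolding sq4_def by blast
  have rabcd: "(real_of_int a)^2 + (real_of_int b)^2 + (real_of_int c)^2 + (real_of_int d)^2 = 2 * real n - 1"
    using arg_cong[OF abcd, of real_of_int] by simp
  obtain k1 where k1: "1 + a + b + c + d = 2*k1" using parity4(1)[OF abcd[symmetric]] by blast
  obtain k2 where k2: "-1 + a + b + c + d = 2*k2" using parity4(2)[OF abcd[symmetric]] by blast
  define u :: "real^8" where "u = of_int a *\<^sub>R axis 3 1 + of_int b *\<^sub>R axis 4 1 + of_int c *\<^sub>R axis 5 1 + of_int d *\<^sub>R axis 6 1"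
  define v where "v = axis 1 1 + u"
  define w where "w = - axis 2 1 + u"
  have uu: "u \<bullet> u = (real_of_int a)^2 + (real_of_int b)^2 + (real_of_int c)^2 + (real_of_int d)^2"
    unfolding u_def by (simp add: inner_add_left inner_add_right inner_axis_axis power2_eq_square)
  have u1: "axis 1 1 \<bullet> u = 0" "axis 2 1 \<bullet> u = 0" "u \<bullet> axis 1 1 = 0" "u \<bullet> axis 2 1 = 0"
    unfolding u_def by (simp_all add: inner_add_left inner_add_right inner_axis_axis)
  have su: "(\<Sum>i\<in>UNIV. u $ i) = of_int (a + b + c + d)"
    unfolding u_def by (simp add: sum.distrib axsum flip: sum_distrib_left)
  have uint: "\<And>i. u $ i \<in> \<int>" unfolding u_def by (simp add: axis_def)
  have "v \<in> E8" unfolding E8_def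
  proof (intro CollectI conjI disjI1 allI exI[of _ k1])
    fix i show "v $ i \<in> \<int>" using uint[of i] unfolding v_def by (simp add: axis_def)
  next
    show "(\<Sum>i\<in>UNIV. v $ i) = 2 * real_of_int k1" unfolding v_def
      using su arg_cong[OF k1, of real_of_int] by (simp add: sum.distrib axsum)
  qed
  moreover have "w \<in> E8" unfolding E8_def
  proof (intro CollectI conjI disjI1 allI exI[of _ k2])
    fix i show "w $ i \<in> \<int>" using uint[of i] unfolding w_def by (simp add: axis_def)
  next
    show "(\<Sum>i\<in>UNIV. w $ i) = 2 * real_of_int k2" unfolding w_def
      using su arg_cong[OF k2, of real_of_int] by (simp add: sum.distrib axsum sum_negf sum_subtractf)
  qed
  moreover have "E8_form v v = 2 * real n" unfolding E8_form_def v_def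
    using uu u1 rabcd by (simp add: inner_add_left inner_add_right inner_diff_left inner_diff_right inner_axis_axis)
  moreover have "E8_form w w = 2 * real n" unfolding E8_form_def w_def
    using uu u1 rabcd by (simp add: inner_add_left inner_add_right inner_diff_left inner_diff_right inner_axis_axis)
  moreover have "E8_form v w = 2 * real n - 1" unfolding E8_form_def v_def w_def
    using uu u1 rabcd by (simp add: inner_add_left inner_add_right inner_diff_left inner_diff_right inner_axis_axis)
  ultimately show ?thesis by blast
qed

end
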